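(* Let $\varrho$ be a normalized proximate order of order $\rho>0$ and let $f(x)=\sum_{\ell=0}^\infty x^\ell a_\ell\in\mathcal{SM}_L(\mathbb{R}^{n+1})$. Then the following are equivalent: (1) $f\in A_\varrho$; (2) $\limsup_{r\to\infty}\frac{\sup_{|x|\le r}\ln|f(x)|}{r^{\varrho(r)}}<\infty$; (3) $\limsup_{\ell\to\infty}|a_\ell|^{1/\ell}\varphi(\ell)<\infty$; (4) $\inf\{\beta>0:f\in A_{\varrho,\beta}\}<\infty$.
   Context: $\mathbb{R}_n$ is the real Clifford algebra generated by $e_1,\dots,e_n$ with $e_ie_j=-e_je_i$ ($i\ne j$), $e_i^2=-1$, with Euclidean norm $|a|^2=\sum_Aa_A^2$. Paravectors $x=x_0+\sum x_\ell e_\ell$ are identified with $\mathbb{R}^{n+1}$; $\mathbb{S}=\{\sum x_\ell e_\ell:\sum x_\ell^2=1\}$. $\mathcal{SM}_L(\mathbb{R}^{n+1})$ is the set of entire left slice monogenic functions: $f(u+jv)=f_0(u,v)+jf_1(u,v)$ for all $u,v\in\mathbb{R}$, $j\in\mathbb{S}$, with $f_0,f_1:\mathbb{R}^2\to\mathbb{R}_n$ continuously differentiable, $f_0$ even and $f_1$ odd in $v$, $\partial_uf_0=\partial_vf_1$, $\partial_vf_0=-\partial_uf_1$; each such $f$ equals its everywhere convergent series $\sum x^\ell a_\ell$, $a_\ell\in\mathbb{R}_n$. A proximate order is a differentiable $\varrho:[0,\infty)\to[0,\infty)$ with $\lim_{r\to\infty}\varrho(r)=\rho>0$ and $\lim_{r\to\infty}\varrho'(r)r\ln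 r=0$; normalized means $r\mapsto r^{\varrho(r)}$ is strictly increasing on $(0,\infty)$ and tends to $0$ as $r\to0^+$; $\varphi$ is the inverse of $r\mapsto r^{\varrho(r)}$. $A_{\varrho,\sigma}=\{f\in\mathcal{SM}_L(\mathbb{R}^{n+1}):\sup_x|f(x)|e^{-\sigma|x|^{\varrho(|x|)}}<\infty\}$ for $\sigma>0$, and $A_\varrho=\bigcup_{\sigma>0}A_{\varrho,\sigma}$. *)

theory Defs
  imports "HOL-Analysis.Analysis"
begin

text \<open>The real Clifford algebra R_n, n = CARD('n), with generators indexed by a finite
linearly ordered type 'n. An element is a real vector indexed by subsets A of 'n
(the coefficient of the basis blade e_A); the norm of real ^ ('n set) is exactly the
Euclidean norm sqrt (sum_A a_A^2).\<close>

type_synonym 'n clif = "real ^ ('n set)"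

definition csign :: "'n::{finite,linorder} set \<Rightarrow> 'n set \<Rightarrow> real" where
  "csign A B = (-1) ^ (card {(i, j). i \<in> A \<and> j \<in> B \<and> j < i} + card (A \<inter> B))"

definition cmul :: "'n::{finite,linorder} clif \<Rightarrow> 'n clif \<Rightarrow> 'n clif" where
  "cmul a b = (\<chi> C. \<Sum>A\<in>UNIV. \<Sum>B\<in>UNIV.
      if (A - B) \<union> (B - A) = C then csign A B * (a $ A) * (b $ B) else 0)"

definition creal :: "real \<Rightarrow> 'n::{finite,linorder} clif" where
  "creal r = (\<chi> A. if A = {} then r else 0)"

primrec cpow :: "'n::{finite,linorder} clif \<Rightarrow> nat \<Rightarrow> 'n clif" where
  "cpow x 0 = creal 1"
| "cpow x (Suc k) = cmul x (cpow x k)"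

text \<open>Paravectors x_0 + sum x_l e_l (identified with R^(n+1)).\<close>
definition paravec :: "'n::{finite,linorder} clif \<Rightarrow> bool" where
  "paravec x \<longleftrightarrow> (\<forall>A. 1 < card A \<longrightarrow> x $ A = 0)"

definition csphere :: "'n::{finite,linorder} clif set" where
  "csphere = {j. paravec j \<and> j $ {} = 0 \<and> norm j = 1}"

text \<open>Entire left slice monogenic functions.  f0, f1 are continuously differentiable
on R^2 (written out: Frechet differentiable everywhere with continuous partial derivatives).\<close>
definition SM_L :: "('n::{finite,linorder} clif \<Rightarrow> 'n clif) set" where
  "SM_L = {f. \<exists>(f0 :: real \<times> real \<Rightarrow> 'n clif) f1 D0 D1.
      (\<forall>z. (f0 has_derivative D0 z) (at z)) \<and> (\<forall>z. (f1 has_derivative D1 z) (at z)) \<and>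
      continuous_on UNIV (\<lambda>z. D0 z (1, 0)) \<and> continuous_on UNIV (\<lambda>z. D0 z (0, 1)) \<and>
      continuous_on UNIV (\<lambda>z. D1 z (1, 0)) \<and> continuous_on UNIV (\<lambda>z. D1 z (0, 1)) \<and>
      (\<forall>u v. f0 (u, - v) = f0 (u, v)) \<and> (\<forall>u v. f1 (u, - v) = - f1 (u, v)) \<and>
      (\<forall>z. D0 z (1, 0) = D1 z (0, 1)) \<and> (\<forall>z. D0 z (0, 1) = - D1 z (1, 0)) \<and>
      (\<forall>u v j. j \<in> csphere \<longrightarrow> f (creal u + v *\<^sub>R j) = f0 (u, v) + cmul j (f1 (u, v)))}"

definition proximate_order :: "(real \<Rightarrow> real) \<Rightarrow> real \<Rightarrow> bool" where
  "proximate_order \<rho>r \<rho> \<longleftrightarrow>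
     (\<forall>r\<ge>0. \<rho>r differentiable (at r within {0..}) \<and> 0 \<le> \<rho>r r) \<and>
     0 < \<rho> \<and> (\<rho>r \<longlongrightarrow> \<rho>) at_top \<and>
     ((\<lambda>r. deriv \<rho>r r * r * ln r) \<longlongrightarrow> 0) at_top"

definition normalized_po :: "(real \<Rightarrow> real) \<Rightarrow> bool" where
  "normalized_po \<rho>r \<longleftrightarrow> strict_mono_on {0<..} (\<lambda>r. r powr \<rho>r r) \<and>
     ((\<lambda>r. r powr \<rho>r r) \<longlongrightarrow> 0) (at_right 0)"

definition po_inv :: "(real \<Rightarrow> real) \<Rightarrow> real \<Rightarrow> real" where
  "po_inv \<rho>r t = (THE r. 0 < r \<and> r powr \<rho>r r = t)"

definition A_rs :: "(real \<Rightarrow> real) \<Rightarrow> real \<Rightarrow> ('n::{finite,linorder} clif \<Rightarrow> 'n clif) set" where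
  "A_rs \<rho>r \<sigma> = {f. f \<in> SM_L \<and>
     (\<exists>C. \<forall>x. paravec x \<longrightarrow> norm (f x) * exp (- \<sigma> * norm x powr \<rho>r (norm x)) \<le> C)}"

definition A_r :: "(real \<Rightarrow> real) \<Rightarrow> ('n::{finite,linorder} clif \<Rightarrow> 'n clif) set" where
  "A_r \<rho>r = (\<Union>\<sigma>\<in>{0<..}. A_rs \<rho>r \<sigma>)"

definition maxmod :: "('n::{finite,linorder} clif \<Rightarrow> 'n clif) \<Rightarrow> real \<Rightarrow> real" where
  "maxmod f r = Sup {norm (f x) | x. paravec x \<and> norm x \<le> r}"

end

theory Submission
  imports Defs "HOL-Complex_Analysis.Complex_Analysis"
begin


lemma cauchy_coeff:
  fixes c :: "nat \<Rightarrow> complex"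
  assumes summ: "\<And>w. summable (\<lambda>n. c n * w^n)" and r: "0 < r"
    and bnd: "\<And>w. norm w = r \<Longrightarrow> norm (\<Sum>n. c n * w^n) \<le> B"
  shows "norm (c n) \<le> B / r^n"
proof -
  define F where "F = Abs_fps c"
  have rad: "fps_conv_radius F = \<infinity>"
  proof -
    have "conv_radius c \<ge> \<infinity>"
      by (rule conv_radius_geI_ex') (use summ in auto)
    thus ?thesis by (simp add: F_def fps_conv_radius_def)
  qed
  have ev: "eval_fps F w = (\<Sum>n. c n * w^n)" for w by (simp add: F_def eval_fps_def)
  have hol: "eval_fps F holomorphic_on UNIV"
    by (rule holomorphic_on_eval_fps) (simp add: rad)
  have "norm ((deriv ^^ n) (eval_fps F) 0) \<le> fact n * B / r^n"
  proof (rule Cauchy_inequality)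
    show "eval_fps F holomorphic_on ball 0 r" using hol holomorphic_on_subset by blast
    show "continuous_on (cball 0 r) (eval_fps F)"
      using hol holomorphic_on_imp_continuous_on continuous_on_subset by blast
    show "0 < r" by fact
    fix x :: complex assume "norm (0 - x) = r"
    thus "norm (eval_fps F x) \<le> B" using bnd[of x] by (simp add: ev)
  qed
  moreover have "fps_nth F n = (deriv ^^ n) (eval_fps F) 0 / fact n"
    by (rule fps_nth_fps_expansion) (rule eval_fps_has_fps_expansion, simp add: rad)
  moreover have "norm (fact n * c n :: complex) = fact n * norm (c n)"
    by (metis norm_mult norm_of_nat of_nat_fact of_real_of_nat_eq)
  ultimately have "fact n * norm (c n) \<le> fact n * (B / r^n)"
    by (simp add: F_def)
  moreover have "(0::real) < fact n" by simp
  ultimately show ?thesis by (metis mult_le_cancel_left_pos times_divide_eq_right)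
qed



lemma sum_single_nz:
  assumes "finite S" "a \<in> S" "\<And>x. x \<in> S \<Longrightarrow> x \<noteq> a \<Longrightarrow> g x = 0"
  shows "sum g S = g a"
proof -
  have "sum g S = g a + sum g (S - {a})" using assms by (simp add: sum.remove)
  also have "sum g (S - {a}) = 0" using assms by (intro sum.neutral) auto
  finally show ?thesis by simp
qed

lemma cmul_nth:
  "cmul a b $ C = (\<Sum>A\<in>UNIV. \<Sum>B\<in>UNIV. (if (A - B) \<union> (B - A) = C then csign A B else 0) * (a $ A) * (b $ B))"
  by (auto simp: cmul_def intro!: sum.cong)

lemma csign_empty_left [simp]: "csign {} B = 1"
  by (simp add: csign_def)
lemma csign_empty_right [simp]: "csign A {} = 1"
  by (simp add: csign_def)

lemma creal_nth: "creal t $ A = (if A = {} then t else 0)"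
  by (simp add: creal_def)

lemma cmul_creal_left: "cmul (creal t) b = t *\<^sub>R b"
proof (subst vec_eq_iff, intro allI)
  fix C :: "'a set"
  have "cmul (creal t) b $ C = (\<Sum>B\<in>UNIV. (if ({} - B) \<union> (B - {}) = C then csign {} B else 0) * t * (b $ B))"
    unfolding cmul_nth by (subst sum_single_nz[of _ "{}"]) (auto simp: creal_nth)
  also have "\<dots> = t * b $ C" by (subst sum_single_nz[of _ C]) auto
  finally show "cmul (creal t) b $ C = (t *\<^sub>R b) $ C" by simp
qed

lemma cmul_creal_right: "cmul b (creal t) = t *\<^sub>R b"
proof (subst vec_eq_iff, intro allI)
  fix C :: "'a set"
  have "cmul b (creal t) $ C = (\<Sum>A\<in>UNIV. (if (A - {}) \<union> ({} - A) = C then csign A {} else 0) * (b $ A) * t)"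
    unfolding cmul_nth by (intro sum.cong refl, subst sum_single_nz[of _ "{}"]) (auto simp: creal_nth)
  also have "\<dots> = t * b $ C" by (subst sum_single_nz[of _ C]) auto
  finally show "cmul b (creal t) $ C = (t *\<^sub>R b) $ C" by simp
qed

lemma cmul_add_left: "cmul (p + q) r = cmul p r + cmul q r"
  by (simp add: vec_eq_iff cmul_nth algebra_simps sum.distrib)
lemma cmul_add_right: "cmul r (p + q) = cmul r p + cmul r q"
  by (simp add: vec_eq_iff cmul_nth algebra_simps sum.distrib)
lemma cmul_scaleR_left: "cmul (c *\<^sub>R p) r = c *\<^sub>R cmul p r"
  by (simp add: vec_eq_iff cmul_nth algebra_simps sum_distrib_left)
lemma cmul_scaleR_right: "cmul r (c *\<^sub>R p) = c *\<^sub>R cmul r p"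
  by (simp add: vec_eq_iff cmul_nth algebra_simps sum_distrib_left)
lemma cmul_minus_left: "cmul (- p) r = - cmul p r"
  using cmul_scaleR_left[of "-1" p r] by simp
lemma cmul_minus_right: "cmul r (- p) = - cmul r p"
  using cmul_scaleR_right[of r "-1" p] by simp
lemma cmul_zero_left [simp]: "cmul 0 r = 0"
  using cmul_scaleR_left[of 0 0 r] by simp
lemma cmul_zero_right [simp]: "cmul r 0 = 0"
  using cmul_scaleR_right[of r 0 0] by simp

lemma abs_csign: "\<bar>csign A B\<bar> = 1"
  by (simp add: csign_def)

lemma norm_cmul_le:
  "norm (cmul (p :: 'n::{finite,linorder} clif) q) \<le> real (CARD('n set))^3 * norm p * norm q"
proof -
  let ?N = "real (CARD('n set))"
  have "norm (cmul p q) \<le> (\<Sum>C\<in>UNIV. \<bar>cmul p q $ C\<bar>)" by (rule norm_le_l1_cart)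
  also have "\<dots> \<le> (\<Sum>(C::'n set)\<in>UNIV. \<Sum>(A::'n set)\<in>UNIV. \<Sum>(B::'n set)\<in>UNIV. norm p * norm q)"
  proof (rule sum_mono)
    fix C
    have "\<bar>cmul p q $ C\<bar> \<le> (\<Sum>(A::'n set)\<in>UNIV. \<bar>\<Sum>(B::'n set)\<in>UNIV. (if (A - B) \<union> (B - A) = C then csign A B else 0) * (p $ A) * (q $ B)\<bar>)"
      unfolding cmul_nth by (rule sum_abs)
    also have "\<dots> \<le> (\<Sum>(A::'n set)\<in>UNIV. \<Sum>(B::'n set)\<in>UNIV. norm p * norm q)"
    proof (intro sum_mono order.trans[OF sum_abs])
      fix A B
      have "\<bar>(if (A - B) \<union> (B - A) = C then csign A B else 0)\<bar> \<le> 1" by (simp add: abs_csign)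
      moreover have "\<bar>p $ A\<bar> \<le> norm p" "\<bar>q $ B\<bar> \<le> norm q" by (rule component_le_norm_cart)+
      ultimately have "\<bar>(if (A - B) \<union> (B - A) = C then csign A B else 0)\<bar> * \<bar>p $ A\<bar> * \<bar>q $ B\<bar> \<le> 1 * norm p * norm q"
        by (intro mult_mono) auto
      thus "\<bar>(if (A - B) \<union> (B - A) = C then csign A B else 0) * (p $ A) * (q $ B)\<bar> \<le> norm p * norm q"
        by (simp add: abs_mult)
    qed
    finally show "\<bar>cmul p q $ C\<bar> \<le> (\<Sum>(A::'n set)\<in>UNIV. \<Sum>(B::'n set)\<in>UNIV. norm p * norm q)" .
  qed
  also have "\<dots> = ?N^3 * norm p * norm q" by (simp add: power3_eq_cube)
  finally show ?thesis .
qed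


definition ek :: "'n::{finite,linorder} \<Rightarrow> 'n clif" where
  "ek k = (\<chi> A. if A = {k} then 1 else 0)"

lemma ek_nth: "ek k $ A = (if A = {k} then 1 else 0)"
  by (simp add: ek_def)

lemma cmul_ek_nth:
  "cmul (ek k) b $ C = csign {k} ((C - {k}) \<union> ({k} - C)) * b $ ((C - {k}) \<union> ({k} - C))"
proof -
  have "cmul (ek k) b $ C = (\<Sum>B\<in>UNIV. (if ({k} - B) \<union> (B - {k}) = C then csign {k} B else 0) * b $ B)"
    unfolding cmul_nth by (subst sum_single_nz[of _ "{k}"]) (auto simp: ek_nth)
  also have "\<dots> = (if ({k} - ((C - {k}) \<union> ({k} - C))) \<union> (((C - {k}) \<union> ({k} - C)) - {k}) = C
        then csign {k} ((C - {k}) \<union> ({k} - C)) else 0) * b $ ((C - {k}) \<union> ({k} - C))"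
  proof (rule sum_single_nz)
    fix B assume "B \<noteq> (C - {k}) \<union> ({k} - C)"
    hence "({k} - B) \<union> (B - {k}) \<noteq> C" by blast
    thus "(if ({k} - B) \<union> (B - {k}) = C then csign {k} B else 0) * b $ B = 0" by simp
  qed auto
  also have "({k} - ((C - {k}) \<union> ({k} - C))) \<union> (((C - {k}) \<union> ({k} - C)) - {k}) = C" by blast
  finally show ?thesis by simp
qed

lemma csign_single_pair:
  "csign {k} ((C - {k}) \<union> ({k} - C)) * csign {k} C = -1"
proof -
  let ?D = "(C - {k}) \<union> ({k} - C)"
  have e: "{(i, j). i \<in> {k} \<and> j \<in> ?D \<and> j < i} = {(i, j). i \<in> {k} \<and> j \<in> C \<and> j < i}"
    by auto
  define m where "m = card {(i, j). i \<in> {k} \<and> j \<in> C \<and> j < i}"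
  have c: "card ({k} \<inter> ?D) + card ({k} \<inter> C) = 1"
    by (cases "k \<in> C") auto
  have "csign {k} ?D * csign {k} C = (-1) ^ (m + card ({k} \<inter> ?D) + (m + card ({k} \<inter> C)))"
    unfolding csign_def e m_def by (simp add: power_add)
  also have "m + card ({k} \<inter> ?D) + (m + card ({k} \<inter> C)) = 2 * m + 1" using c by simp
  also have "(-1::real) ^ (2 * m + 1) = -1" by simp
  finally show ?thesis .
qed

lemma cmul_ek_ek: "cmul (ek k) (cmul (ek k) b) = - b"
proof (subst vec_eq_iff, intro allI)
  fix C :: "'a set"
  let ?D = "(C - {k}) \<union> ({k} - C)"
  have dd: "(?D - {k}) \<union> ({k} - ?D) = C" by blast
  have "cmul (ek k) (cmul (ek k) b) $ C = csign {k} ?D * (csign {k} C * b $ C)"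
    by (simp only: cmul_ek_nth dd)
  also have "\<dots> = (csign {k} ?D * csign {k} C) * b $ C" by simp
  also have "\<dots> = - b $ C" by (simp add: csign_single_pair)
  finally show "cmul (ek k) (cmul (ek k) b) $ C = (- b) $ C" by simp
qed

lemma cmul_ek_ek1: "cmul (ek k) (ek k) = - creal 1"
proof -
  have "cmul (ek k) (ek k) = cmul (ek k) (cmul (ek k) (creal 1))"
    by (simp add: cmul_creal_right)
  thus ?thesis by (simp add: cmul_ek_ek)
qed

definition slice :: "'n::{finite,linorder} \<Rightarrow> complex \<Rightarrow> 'n clif" where
  "slice k w = creal (Re w) + Im w *\<^sub>R ek k"

lemma creal_add: "creal a + creal b = creal (a + b)"
  by (simp add: vec_eq_iff creal_nth)
lemma creal_scaleR: "c *\<^sub>R creal a = creal (c * a)"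
  by (simp add: vec_eq_iff creal_nth)
lemma creal_minus: "- creal a = creal (- a)"
  by (simp add: vec_eq_iff creal_nth)

lemma cmul_slice_left: "cmul (slice k z) a = Re z *\<^sub>R a + Im z *\<^sub>R cmul (ek k) a"
  by (simp add: slice_def cmul_add_left cmul_scaleR_left cmul_creal_left)

lemma cmul_slice_slice: "cmul (slice k w) (slice k z) = slice k (w * z)"
  by (simp add: slice_def cmul_add_left cmul_add_right cmul_scaleR_left cmul_scaleR_right
      cmul_creal_right cmul_creal_left cmul_ek_ek1)
     (auto simp: vec_eq_iff creal_nth ek_nth algebra_simps)

lemma slice_one: "slice k 1 = creal 1"
  by (simp add: slice_def)

lemma cpow_slice: "cpow (slice k w) l = slice k (w ^ l)"
  by (induction l) (simp_all add: slice_one cmul_slice_slice)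

lemma slice_nth: "slice k w $ A = (if A = {} then Re w else if A = {k} then Im w else 0)"
  by (auto simp: slice_def creal_nth ek_nth)

lemma paravec_slice: "paravec (slice k w)"
  unfolding paravec_def slice_nth by auto

lemma norm_slice: "norm (slice k w) = cmod w"
proof -
  have "(\<Sum>A\<in>UNIV. (slice k w $ A)\<^sup>2) = (\<Sum>A\<in>UNIV. (if A = {} then (Re w)\<^sup>2 else 0) + (if A = {k} then (Im w)\<^sup>2 else 0))"
    by (intro sum.cong refl) (auto simp: slice_nth)
  also have "\<dots> = (Re w)\<^sup>2 + (Im w)\<^sup>2" by (simp add: sum.distrib)
  finally show ?thesis
    by (simp add: norm_vec_def L2_set_def cmod_def)
qed

lemma slice_real: "slice k (complex_of_real t) = creal t"
  by (simp add: slice_def)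

definition cc :: "'n::{finite,linorder} set \<Rightarrow> 'n \<Rightarrow> 'n clif \<Rightarrow> complex" where
  "cc C k b = Complex (b $ C) (- (cmul (ek k) b $ C))"

lemma cc_add: "cc C k (a + b) = cc C k a + cc C k b"
  by (simp add: cc_def cmul_add_right complex_eq_iff)
lemma cc_scaleR: "cc C k (t *\<^sub>R a) = complex_of_real t * cc C k a"
  by (simp add: cc_def cmul_scaleR_right complex_eq_iff)
lemma cc_ek: "cc C k (cmul (ek k) a) = \<i> * cc C k a"
  by (simp add: cc_def cmul_ek_ek complex_eq_iff)

lemma linear_cc: "linear (cc C k)"
  by (rule linearI) (simp add: cc_add, metis cc_scaleR scaleR_conv_of_real)

lemma bounded_linear_cc: "bounded_linear (cc C k)"
  using linear_cc linear_conv_bounded_linear by blast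

lemma cc_slice_mul: "cc C k (cmul (slice k z) a) = z * cc C k a"
proof -
  have "cc C k (cmul (slice k z) a) = (complex_of_real (Re z) + \<i> * complex_of_real (Im z)) * cc C k a"
    by (simp add: cmul_slice_left cc_add cc_scaleR cc_ek algebra_simps)
  thus ?thesis using complex_eq[of z] by simp
qed

lemma Re_cc: "Re (cc C k b) = b $ C"
  by (simp add: cc_def)

lemma norm_cc_le: "cmod (cc (C::'n::{finite,linorder} set) k b) \<le> (1 + real (CARD('n set))^3) * norm b"
proof -
  have "cmod (cc C k b) \<le> \<bar>b $ C\<bar> + \<bar>cmul (ek k) b $ C\<bar>"
    unfolding cc_def using cmod_le[of "Complex (b $ C) (- (cmul (ek k) b $ C))"] by simp
  also have "\<dots> \<le> norm b + norm (cmul (ek k) b)"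
    by (intro add_mono component_le_norm_cart)
  also have "norm (cmul (ek k) b) \<le> real (CARD('n set))^3 * norm (ek k) * norm b"
    by (rule norm_cmul_le)
  also have "norm (ek k) = 1"
  proof -
    have "ek k = slice k \<i>" by (simp add: vec_eq_iff slice_nth ek_nth)
    thus ?thesis by (simp add: norm_slice)
  qed
  finally show ?thesis by (simp add: algebra_simps)
qed

lemma norm_le_sum_cc: "norm b \<le> (\<Sum>C\<in>UNIV. cmod (cc C k b))"
proof -
  have "norm b \<le> (\<Sum>C\<in>UNIV. \<bar>b $ C\<bar>)" by (rule norm_le_l1_cart)
  also have "\<dots> \<le> (\<Sum>C\<in>UNIV. cmod (cc C k b))"
    by (intro sum_mono) (metis Re_cc abs_Re_le_cmod)
  finally show ?thesis .
qed



lemma po_deriv: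
  assumes "proximate_order \<rho>r \<rho>" "0 < r"
  shows "(\<rho>r has_real_derivative deriv \<rho>r r) (at r)"
proof -
  have "\<rho>r differentiable (at r within {0..})" using assms unfolding proximate_order_def by auto
  moreover have "at r within {0..} = at r"
    by (rule at_within_open_subset[of _ "{0<..}"]) (use assms in auto)
  ultimately show ?thesis by (simp add: DERIV_deriv_iff_real_differentiable)
qed

lemma po_isCont:
  assumes "proximate_order \<rho>r \<rho>" "0 < r"
  shows "isCont \<rho>r r"
  using po_deriv[OF assms] DERIV_isCont by blast

lemma V_pos: "0 < (r::real) \<Longrightarrow> 0 < r powr \<rho>r r"
  by simp

lemma ln_V: "0 < (r::real) \<Longrightarrow> ln (r powr \<rho>r r) = \<rho>r r * ln r"
  by simp

lemma V_mono:
  assumes "normalized_po \<rho>r" "0 \<le> r" "r \<le> s"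
  shows "r powr \<rho>r r \<le> s powr \<rho>r s"
proof (cases "r = 0")
  case True thus ?thesis by simp
next
  case False
  hence "0 < r" using assms by simp
  thus ?thesis using assms unfolding normalized_po_def strict_mono_on_def
    by (cases "r = s") (auto intro: less_imp_le)
qed

lemma potter:
  assumes po: "proximate_order \<rho>r \<rho>"
  shows "\<exists>T\<ge>1. \<forall>t s. T \<le> t \<longrightarrow> t \<le> s \<longrightarrow>
     (\<rho>/2) * (ln s - ln t) \<le> ln (s powr \<rho>r s) - ln (t powr \<rho>r t) \<and>
     ln (s powr \<rho>r s) - ln (t powr \<rho>r t) \<le> (3*\<rho>/2) * (ln s - ln t)"
proof -
  have rho: "0 < \<rho>" and lim1: "(\<rho>r \<longlongrightarrow> \<rho>) at_top"
    and lim2: "((\<lambda>r. deriv \<rho>r r * r * ln r) \<longlongrightarrow> 0) at_top"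
    using po unfolding proximate_order_def by auto
  have "eventually (\<lambda>r. dist (\<rho>r r) \<rho> < \<rho>/4) at_top"
    using tendstoD[OF lim1, of "\<rho>/4"] rho by simp
  moreover have "eventually (\<lambda>r. dist (deriv \<rho>r r * r * ln r) 0 < \<rho>/4) at_top"
    using tendstoD[OF lim2, of "\<rho>/4"] rho by simp
  moreover have "eventually (\<lambda>r::real. 1 \<le> r) at_top" by simp
  ultimately have "eventually (\<lambda>r. dist (\<rho>r r) \<rho> < \<rho>/4 \<and> dist (deriv \<rho>r r * r * ln r) 0 < \<rho>/4 \<and> 1 \<le> r) at_top"
    by eventually_elim auto
  then obtain T where T: "\<And>r. T \<le> r \<Longrightarrow> dist (\<rho>r r) \<rho> < \<rho>/4 \<and> dist (deriv \<rho>r r * r * ln r) 0 < \<rho>/4 \<and> 1 \<le> r"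
    unfolding eventually_at_top_linorder by blast
  have T1: "1 \<le> T" using T by blast
  define k where "k u = \<rho>r (exp u) * u" for u
  define k' where "k' u = deriv \<rho>r (exp u) * exp u * u + \<rho>r (exp u)" for u
  have kd: "(k has_real_derivative k' u) (at u)" for u
  proof -
    have "((\<lambda>u. \<rho>r (exp u)) has_real_derivative deriv \<rho>r (exp u) * exp u) (at u)"
      using DERIV_chain2[OF po_deriv[OF po, of "exp u"] DERIV_exp[of u]] by simp
    from DERIV_mult[OF this DERIV_ident] show ?thesis
      unfolding k_def k'_def by simp
  qed
  have kb: "\<rho>/2 \<le> k' u \<and> k' u \<le> 3*\<rho>/2" if "ln T \<le> u" for u
  proof -
    have "T \<le> exp u" using that T1 by (metis exp_ln exp_le_cancel_iff less_le_trans zero_less_one less_eq_real_def)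
    from T[OF this] have "\<bar>\<rho>r (exp u) - \<rho>\<bar> < \<rho>/4" "\<bar>deriv \<rho>r (exp u) * exp u * u\<bar> < \<rho>/4"
      by (simp_all add: dist_real_def)
    thus ?thesis unfolding k'_def by linarith
  qed
  have klnV: "k (ln r) = ln (r powr \<rho>r r)" if "0 < r" for r
    using that by (simp add: k_def)
  show ?thesis
  proof (intro exI[of _ T] conjI allI impI T1)
    fix t s assume ts: "T \<le> t" "t \<le> s"
    have tpos: "0 < t" using ts T1 by simp
    have spos: "0 < s" using ts T1 by simp
    have "(\<rho>/2) * (ln s - ln t) \<le> k (ln s) - k (ln t) \<and> k (ln s) - k (ln t) \<le> (3*\<rho>/2) * (ln s - ln t)"
    proof (cases "t = s")
      case True thus ?thesis by simp
    next
      case False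
      hence "ln t < ln s" using ts tpos by simp
      from MVT2[OF this, of k k'] kd obtain z where z: "ln t < z" "z < ln s" "k (ln s) - k (ln t) = (ln s - ln t) * k' z"
        by blast
      have "ln T \<le> ln t" using ts T1 by simp
      hence "\<rho>/2 \<le> k' z \<and> k' z \<le> 3*\<rho>/2" using z by (intro kb) simp
      moreover have "0 \<le> ln s - ln t" using z by simp
      ultimately have "\<rho>/2 * (ln s - ln t) \<le> k' z * (ln s - ln t)" "k' z * (ln s - ln t) \<le> 3*\<rho>/2 * (ln s - ln t)"
        by (intro mult_right_mono; simp)+
      thus ?thesis using z(3) by (simp add: mult.commute)
    qed
    thus "(\<rho>/2) * (ln s - ln t) \<le> ln (s powr \<rho>r s) - ln (t powr \<rho>r t)"
         "ln (s powr \<rho>r s) - ln (t powr \<rho>r t) \<le> (3*\<rho>/2) * (ln s - ln t)"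
      using klnV[OF tpos] klnV[OF spos] by auto
  qed
qed


lemma V_large:
  assumes po: "proximate_order \<rho>r \<rho>" and np: "normalized_po \<rho>r"
  shows "\<exists>R>0. \<forall>r\<ge>R. y \<le> r powr \<rho>r r"
proof -
  have rho: "0 < \<rho>" using po unfolding proximate_order_def by auto
  obtain T where T1: "1 \<le> T" and P: "\<And>(t::real) (s::real). T \<le> t \<Longrightarrow> t \<le> s \<Longrightarrow>
     (\<rho>/2) * (ln s - ln t) \<le> ln (s powr \<rho>r s) - ln (t powr \<rho>r t)"
    using potter[OF po] by blast
  define a where "a = ln (T powr \<rho>r T)"
  define R where "R = T * exp (2 * (\<bar>y\<bar> + \<bar>a\<bar>) / \<rho>)"
  have "1 \<le> exp (2 * (\<bar>y\<bar> + \<bar>a\<bar>) / \<rho>)" using rho by simp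
  hence "T * 1 \<le> T * exp (2 * (\<bar>y\<bar> + \<bar>a\<bar>) / \<rho>)" using T1 by (intro mult_left_mono) auto
  hence RT: "T \<le> R" unfolding R_def by simp
  have lnR: "ln R - ln T = 2 * (\<bar>y\<bar> + \<bar>a\<bar>) / \<rho>"
    unfolding R_def using T1 rho by (simp add: ln_mult)
  show ?thesis
  proof (intro exI[of _ R] conjI allI impI)
    show "0 < R" using RT T1 by simp
    fix r assume rR: "R \<le> r"
    have "(\<rho>/2) * (ln r - ln T) \<le> ln (r powr \<rho>r r) - a"
      unfolding a_def using P[of T r] RT rR by simp
    moreover have "ln R \<le> ln r" using rR RT T1 by simp
    hence "(\<rho>/2) * (ln R - ln T) \<le> (\<rho>/2) * (ln r - ln T)" using rho by simp
    moreover have "(\<rho>/2) * (ln R - ln T) = \<bar>y\<bar> + \<bar>a\<bar>" using lnR rho by simp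
    ultimately have "\<bar>y\<bar> \<le> ln (r powr \<rho>r r)" by linarith
    hence "exp \<bar>y\<bar> \<le> exp (ln (r powr \<rho>r r))" by (simp only: exp_le_cancel_iff)
    moreover have "0 < r" using rR RT T1 by simp
    hence "exp (ln (r powr \<rho>r r)) = r powr \<rho>r r" by (intro exp_ln) simp
    ultimately have "exp \<bar>y\<bar> \<le> r powr \<rho>r r" by (simp only:)
    moreover have "y \<le> exp \<bar>y\<bar>" using exp_ge_add_one_self[of "\<bar>y\<bar>"] by linarith
    ultimately show "y \<le> r powr \<rho>r r" by linarith
  qed
qed

lemma V_cont:
  assumes po: "proximate_order \<rho>r \<rho>" and a: "0 < a"
  shows "continuous_on {a..b} (\<lambda>r. r powr \<rho>r r)"
proof -
  have "isCont \<rho>r x" if "x \<in> {a..b}" for x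
    using po_isCont[OF po, of x] that a by simp
  hence c: "continuous_on {a..b} \<rho>r"
    by (intro continuous_at_imp_continuous_on) blast
  have "continuous_on {a..b} (\<lambda>r::real. r)" by (rule continuous_on_id)
  moreover have "\<forall>x\<in>{a..b}. x \<noteq> (0::real)" using a by auto
  ultimately show ?thesis using continuous_on_powr[OF _ c] by blast
qed

lemma po_inv_prop:
  assumes po: "proximate_order \<rho>r \<rho>" and np: "normalized_po \<rho>r" and l: "0 < l"
  shows "0 < po_inv \<rho>r l \<and> po_inv \<rho>r l powr \<rho>r (po_inv \<rho>r l) = l"
proof -
  have sm: "strict_mono_on {0<..} (\<lambda>r. r powr \<rho>r r)" and lim0: "((\<lambda>r. r powr \<rho>r r) \<longlongrightarrow> 0) (at_right 0)"
    using np unfolding normalized_po_def by auto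
  have "eventually (\<lambda>r. r powr \<rho>r r < l) (at_right (0::real))"
    using order_tendstoD(2)[OF lim0 l] .
  then obtain b where b: "0 < b" "\<And>r. 0 < r \<Longrightarrow> r < b \<Longrightarrow> r powr \<rho>r r < l"
    unfolding eventually_at_right_field by auto
  define e where "e = b / 2"
  have e: "0 < e" "e powr \<rho>r e < l" using b unfolding e_def by auto
  obtain R where R: "R > 0" "\<And>r. r \<ge> R \<Longrightarrow> l \<le> r powr \<rho>r r" using V_large[OF po np] by blast
  define R' where "R' = max R e"
  have "\<exists>x. e \<le> x \<and> x \<le> R' \<and> x powr \<rho>r x = l"
  proof (rule IVT')
    show "e powr \<rho>r e \<le> l" using e by simp
    show "l \<le> R' powr \<rho>r R'" using R(2)[of R'] by (simp add: R'_def)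
    show "e \<le> R'" by (simp add: R'_def)
    show "continuous_on {e..R'} (\<lambda>r. r powr \<rho>r r)" by (rule V_cont[OF po e(1)])
  qed
  then obtain x where "e \<le> x" and x2: "x powr \<rho>r x = l" by blast
  hence x: "0 < x" "x powr \<rho>r x = l" using e by auto
  have uniq: "y = x" if "0 < y" "y powr \<rho>r y = l" for y
  proof (rule ccontr)
    assume "y \<noteq> x"
    hence "y < x \<or> x < y" by auto
    thus False
    proof
      assume yx: "y < x"
      have "y powr \<rho>r y < x powr \<rho>r x" by (rule strict_mono_onD[OF sm]) (use yx x that in auto)
      thus False using x that by linarith
    next
      assume xy: "x < y"
      have "x powr \<rho>r x < y powr \<rho>r y" by (rule strict_mono_onD[OF sm]) (use xy x that in auto)
      thus False using x that by linarith
    qed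
  qed
  have "po_inv \<rho>r l = x" unfolding po_inv_def
    by (rule the_equality) (use x uniq in blast)+
  thus ?thesis using x by simp
qed

lemma po_inv_mono1:
  assumes po: "proximate_order \<rho>r \<rho>" and np: "normalized_po \<rho>r" and l: "1 \<le> l"
  shows "po_inv \<rho>r 1 \<le> po_inv \<rho>r l"
proof (rule ccontr)
  assume "\<not> ?thesis"
  hence lt: "po_inv \<rho>r l < po_inv \<rho>r 1" by simp
  have p1: "0 < po_inv \<rho>r 1 \<and> po_inv \<rho>r 1 powr \<rho>r (po_inv \<rho>r 1) = 1" by (rule po_inv_prop[OF po np]) simp
  have pl: "0 < po_inv \<rho>r l \<and> po_inv \<rho>r l powr \<rho>r (po_inv \<rho>r l) = l" by (rule po_inv_prop[OF po np]) (use l in simp)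
  have sm: "strict_mono_on {0<..} (\<lambda>r. r powr \<rho>r r)" using np unfolding normalized_po_def by blast
  have "po_inv \<rho>r l powr \<rho>r (po_inv \<rho>r l) < po_inv \<rho>r 1 powr \<rho>r (po_inv \<rho>r 1)"
    using strict_mono_onD[OF sm, of "po_inv \<rho>r l" "po_inv \<rho>r 1"] lt p1 pl by simp
  hence "l < 1" using p1 pl by linarith
  thus False using l by simp
qed


lemma potter_lower_bound:
  fixes T t s :: real
  assumes po: "proximate_order \<rho>r \<rho>"
    and T: "\<And>(t::real) (s::real). T \<le> t \<Longrightarrow> t \<le> s \<Longrightarrow> (\<rho>/2) * (ln s - ln t) \<le> ln (s powr \<rho>r s) - ln (t powr \<rho>r t)"
    and T1: "1 \<le> T" and ts: "T \<le> t" "t \<le> s"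
  shows "t powr \<rho>r t * (ln s - ln t) \<le> (2/\<rho>) * s powr \<rho>r s"
proof -
  have rho: "0 < \<rho>" using po unfolding proximate_order_def by auto
  have tpos: "0 < t" and spos: "0 < s" using ts T1 by linarith+
  define d where "d = ln s - ln t"
  define vt where "vt = t powr \<rho>r t"
  define vs where "vs = s powr \<rho>r s"
  have vt: "0 < vt" unfolding vt_def using tpos by simp
  have vs: "0 < vs" unfolding vs_def using spos by simp
  have "ln vt + (\<rho>/2) * d \<le> ln vs" using T[OF ts] unfolding d_def vt_def vs_def by linarith
  hence "exp (ln vt + (\<rho>/2) * d) \<le> exp (ln vs)" by (simp only: exp_le_cancel_iff)
  hence 1: "vt * exp ((\<rho>/2) * d) \<le> vs"
    by (simp only: exp_add exp_ln[OF vt] exp_ln[OF vs])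
  have "(\<rho>/2) * d \<le> exp ((\<rho>/2) * d)"
    using exp_ge_add_one_self[of "(\<rho>/2) * d"] by linarith
  hence "vt * ((\<rho>/2) * d) \<le> vt * exp ((\<rho>/2) * d)"
    using vt by (intro mult_left_mono) auto
  with 1 have 2: "vt * ((\<rho>/2) * d) \<le> vs" by linarith
  have "vt * d = (2/\<rho>) * (vt * ((\<rho>/2) * d))" using rho by simp
  also have "\<dots> \<le> (2/\<rho>) * vs" using 2 rho by (intro mult_left_mono) auto
  finally show ?thesis unfolding vt_def vs_def d_def .
qed

lemma bound_Q:
  fixes t1 :: real
  assumes po: "proximate_order \<rho>r \<rho>" and np: "normalized_po \<rho>r" and t1: "0 < t1"
  shows "\<exists>c0\<ge>0. \<forall>t::real. \<forall>s::real. t1 \<le> t \<longrightarrow> 0 < s \<longrightarrow>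
           t powr \<rho>r t * (ln s - ln t) \<le> c0 + (2/\<rho>) * s powr \<rho>r s"
proof -
  have rho: "0 < \<rho>" using po unfolding proximate_order_def by auto
  obtain T0 where T01: "1 \<le> T0" and P0: "\<And>(t::real) (s::real). T0 \<le> t \<Longrightarrow> t \<le> s \<Longrightarrow>
     (\<rho>/2) * (ln s - ln t) \<le> ln (s powr \<rho>r s) - ln (t powr \<rho>r t)"
    using potter[OF po] by blast
  define T where "T = max T0 t1"
  have T1: "1 \<le> T" and P: "\<And>(t::real) (s::real). T \<le> t \<Longrightarrow> t \<le> s \<Longrightarrow>
     (\<rho>/2) * (ln s - ln t) \<le> ln (s powr \<rho>r s) - ln (t powr \<rho>r t)"
    using T01 P0 unfolding T_def by auto
  have Tt1: "t1 \<le> T" unfolding T_def by simp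
  have PL: "t powr \<rho>r t * (ln s - ln t) \<le> (2/\<rho>) * s powr \<rho>r s" if "T \<le> t" "t \<le> s" for t s :: real
    by (rule potter_lower_bound[OF po P T1 that])
  define c0 where "c0 = T powr \<rho>r T * (ln T - ln t1)"
  have c00: "0 \<le> c0" unfolding c0_def using Tt1 t1 by simp
  show ?thesis
  proof (intro exI[of _ c0] conjI allI impI c00)
    fix t s :: real assume tt: "t1 \<le> t" and s: "0 < s"
    have tpos: "0 < t" using tt t1 by linarith
    have Vs: "0 \<le> (2/\<rho>) * s powr \<rho>r s" using rho by (intro mult_nonneg_nonneg) auto
    show "t powr \<rho>r t * (ln s - ln t) \<le> c0 + (2/\<rho>) * s powr \<rho>r s"
    proof (cases "s \<le> t")
      case True
      hence "ln s - ln t \<le> 0" using s tpos by simp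
      hence "t powr \<rho>r t * (ln s - ln t) \<le> 0" by (simp add: mult_nonneg_nonpos)
      thus ?thesis using c00 Vs by linarith
    next
      case False
      hence ts: "t \<le> s" by simp
      show ?thesis
      proof (cases "T \<le> t")
        case True
        thus ?thesis using PL[OF True ts] c00 by linarith
      next
        case False
        hence tT: "t \<le> T" by simp
        have Vt: "t powr \<rho>r t \<le> T powr \<rho>r T" by (rule V_mono[OF np]) (use tpos tT in auto)
        have Vt0: "0 \<le> t powr \<rho>r t" by simp
        have "ln T - ln t \<le> ln T - ln t1" using tt t1 by simp
        moreover have "0 \<le> ln T - ln t" using tT tpos by simp
        ultimately have A: "t powr \<rho>r t * (ln T - ln t) \<le> c0"
          unfolding c0_def using Vt Vt0 by (intro mult_mono) auto
        have B: "t powr \<rho>r t * (ln s - ln T) \<le> (2/\<rho>) * s powr \<rho>r s"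
        proof (cases "s \<le> T")
          case True
          hence "ln s - ln T \<le> 0" using s T1 by simp
          hence "t powr \<rho>r t * (ln s - ln T) \<le> 0" using Vt0 by (simp add: mult_nonneg_nonpos)
          thus ?thesis using Vs by linarith
        next
          case False
          hence "0 \<le> ln s - ln T" using T1 by simp
          hence "t powr \<rho>r t * (ln s - ln T) \<le> T powr \<rho>r T * (ln s - ln T)"
            using Vt by (intro mult_right_mono) auto
          also have "\<dots> \<le> (2/\<rho>) * s powr \<rho>r s" using PL[of T s] False by simp
          finally show ?thesis .
        qed
        have "t powr \<rho>r t * (ln s - ln t) = t powr \<rho>r t * (ln s - ln T) + t powr \<rho>r t * (ln T - ln t)"
          by (simp add: algebra_simps)
        thus ?thesis using A B by linarith
      qed
    qed
  qed
qed

lemma bound_U: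
  assumes po: "proximate_order \<rho>r \<rho>" and np: "normalized_po \<rho>r" and c: "1 \<le> c"
  shows "\<exists>c2. \<forall>r\<ge>0. (c * r) powr \<rho>r (c * r) \<le> c2 + exp ((3*\<rho>/2) * ln c) * r powr \<rho>r r"
proof -
  obtain T where T1: "1 \<le> T" and P: "\<And>(t::real) (s::real). T \<le> t \<Longrightarrow> t \<le> s \<Longrightarrow>
     ln (s powr \<rho>r s) - ln (t powr \<rho>r t) \<le> (3*\<rho>/2) * (ln s - ln t)"
    using potter[OF po] by blast
  show ?thesis
  proof (intro exI[of _ "(c * T) powr \<rho>r (c * T)"] allI impI)
    fix r :: real assume r: "0 \<le> r"
    have E0: "0 \<le> exp ((3*\<rho>/2) * ln c) * r powr \<rho>r r" by simp
    show "(c * r) powr \<rho>r (c * r) \<le> (c * T) powr \<rho>r (c * T) + exp ((3*\<rho>/2) * ln c) * r powr \<rho>r r"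
    proof (cases "T \<le> r")
      case True
      have rpos: "0 < r" using True T1 by simp
      have cr: "r \<le> c * r" using c rpos by simp
      have "ln ((c * r) powr \<rho>r (c * r)) \<le> ln (r powr \<rho>r r) + (3*\<rho>/2) * (ln (c * r) - ln r)"
        using P[OF True cr] by simp
      also have "ln (c * r) - ln r = ln c" using c rpos by (simp add: ln_mult)
      finally have "exp (ln ((c * r) powr \<rho>r (c * r))) \<le> exp (ln (r powr \<rho>r r) + (3*\<rho>/2) * ln c)"
        by (simp only: exp_le_cancel_iff)
      hence "(c * r) powr \<rho>r (c * r) \<le> r powr \<rho>r r * exp ((3*\<rho>/2) * ln c)"
        using rpos c by (simp add: exp_add powr_def)
      moreover have "0 \<le> (c * T) powr \<rho>r (c * T)" by simp
      moreover have "r powr \<rho>r r * exp ((3*\<rho>/2) * ln c) = exp ((3*\<rho>/2) * ln c) * r powr \<rho>r r"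
        by (rule mult.commute)
      ultimately show ?thesis by linarith
    next
      case False
      have "(c * r) powr \<rho>r (c * r) \<le> (c * T) powr \<rho>r (c * T)"
        by (rule V_mono[OF np]) (use False r c in auto)
      thus ?thesis using E0 by linarith
    qed
  qed
qed


lemma growth:
  assumes po: "proximate_order \<rho>r \<rho>" and np: "normalized_po \<rho>r" and K: "0 < K"
  shows "\<exists>\<sigma>>0. \<exists>c. \<forall>r::real. 0 \<le> r \<longrightarrow> (\<forall>l::nat. 1 \<le> l \<longrightarrow>
            (K * r / po_inv \<rho>r (real l)) ^ l \<le> (1/2) ^ l * exp (c + \<sigma> * r powr \<rho>r r))"
proof -
  have rho: "0 < \<rho>" using po unfolding proximate_order_def by auto
  define t1 where "t1 = po_inv \<rho>r 1"
  have t1: "0 < t1" unfolding t1_def using po_inv_prop[OF po np, of 1] by simp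
  obtain c0 where c00: "0 \<le> c0" and Q: "\<And>t s. t1 \<le> t \<Longrightarrow> 0 < s \<Longrightarrow>
           t powr \<rho>r t * (ln s - ln t) \<le> c0 + (2/\<rho>) * s powr \<rho>r s"
    using bound_Q[OF po np t1] by blast
  define cc where "cc = max 1 (2 * K)"
  have cc1: "1 \<le> cc" unfolding cc_def by simp
  define E where "E = exp ((3*\<rho>/2) * ln cc)"
  have E: "0 < E" unfolding E_def by simp
  obtain c2 where U: "\<And>r. 0 \<le> r \<Longrightarrow> (cc * r) powr \<rho>r (cc * r) \<le> c2 + E * r powr \<rho>r r"
    using bound_U[OF po np cc1] unfolding E_def by blast
  define \<sigma> where "\<sigma> = (2/\<rho>) * E"
  define c where "c = c0 + (2/\<rho>) * c2"
  have \<sigma>: "0 < \<sigma>" unfolding \<sigma>_def using rho E by simp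
  show ?thesis
  proof (rule exI[of _ \<sigma>], intro conjI \<sigma> exI[of _ c] allI impI)
    fix r :: real and l :: nat assume r: "0 \<le> r" and l: "1 \<le> l"
    have rhs0: "0 \<le> (1/2) ^ l * exp (c + \<sigma> * r powr \<rho>r r)" by simp
    show "(K * r / po_inv \<rho>r (real l)) ^ l \<le> (1/2) ^ l * exp (c + \<sigma> * r powr \<rho>r r)"
    proof (cases "r = 0")
      case True
      thus ?thesis using l rhs0 by (simp add: power_0_left)
    next
      case False
      hence rpos: "0 < r" using r by simp
      define t where "t = po_inv \<rho>r (real l)"
      have tp: "0 < t \<and> t powr \<rho>r t = real l" unfolding t_def by (rule po_inv_prop[OF po np]) (use l in simp)
      have tt1: "t1 \<le> t" unfolding t_def t1_def by (rule po_inv_mono1[OF po np]) (use l in simp)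
      define s where "s = 2 * K * r"
      have spos: "0 < s" unfolding s_def using K rpos by simp
      have A: "real l * (ln s - ln t) \<le> c0 + (2/\<rho>) * s powr \<rho>r s" using Q[OF tt1 spos] tp by simp
      have "s powr \<rho>r s \<le> (cc * r) powr \<rho>r (cc * r)"
        by (rule V_mono[OF np]) (use spos rpos in \<open>auto simp: s_def cc_def intro!: mult_right_mono\<close>)
      also have "\<dots> \<le> c2 + E * r powr \<rho>r r" by (rule U[OF r])
      finally have "(2/\<rho>) * s powr \<rho>r s \<le> (2/\<rho>) * (c2 + E * r powr \<rho>r r)"
        using rho by (intro mult_left_mono) auto
      with A have "real l * (ln s - ln t) \<le> c0 + (2/\<rho>) * (c2 + E * r powr \<rho>r r)" by linarith
      also have "\<dots> = c + \<sigma> * r powr \<rho>r r" unfolding c_def \<sigma>_def by (simp add: algebra_simps)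
      finally have lnb: "real l * (ln s - ln t) \<le> c + \<sigma> * r powr \<rho>r r" .
      have "(s / t) ^ l = exp (ln ((s / t) ^ l))" using spos tp by simp
      also have "ln ((s / t) ^ l) = real l * (ln s - ln t)" using spos tp by (simp add: ln_realpow ln_div)
      finally have "(s / t) ^ l \<le> exp (c + \<sigma> * r powr \<rho>r r)" using lnb by simp
      hence "(1/2) ^ l * (s / t) ^ l \<le> (1/2) ^ l * exp (c + \<sigma> * r powr \<rho>r r)"
        by (intro mult_left_mono) auto
      moreover have "(K * r / t) ^ l = ((1/2) * (s / t)) ^ l" unfolding s_def by simp
      moreover have "((1/2) * (s / t)) ^ l = (1/2) ^ l * (s / t) ^ l" by (rule power_mult_distrib)
      ultimately show ?thesis unfolding t_def[symmetric] by linarith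
    qed
  qed
qed



abbreviation Bm :: "'n::{finite,linorder} itself \<Rightarrow> real" where
  "Bm TYPE('n) \<equiv> max 1 (real (CARD('n set))^3)"

lemma norm_creal1: "norm (creal 1 :: 'n::{finite,linorder} clif) = 1"
  using norm_slice[of "undefined::'n" 1] slice_real[of "undefined::'n" 1] by simp

lemma paravec_creal: "paravec (creal t :: 'n::{finite,linorder} clif)"
  using paravec_slice[of "undefined::'n" "complex_of_real t"] slice_real[of "undefined::'n" t] by simp

lemma norm_creal: "norm (creal t :: 'n::{finite,linorder} clif) = \<bar>t\<bar>"
  using norm_slice[of "undefined::'n" "complex_of_real t"] slice_real[of "undefined::'n" t] by simp

lemma cpow_creal: "cpow (creal t :: 'n::{finite,linorder} clif) l = creal (t ^ l)"
  using cpow_slice[of "undefined::'n" "complex_of_real t" l] slice_real[of "undefined::'n"]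
  by (metis of_real_power)

lemma norm_cmul_le1:
  "norm (cmul (p :: 'n::{finite,linorder} clif) q) \<le> Bm TYPE('n) * norm p * norm q"
proof -
  have "norm (cmul p q) \<le> real (CARD('n set))^3 * norm p * norm q" by (rule norm_cmul_le)
  also have "\<dots> \<le> Bm TYPE('n) * norm p * norm q"
    by (intro mult_right_mono) auto
  finally show ?thesis .
qed

lemma norm_cpow_le:
  "norm (cpow (x :: 'n::{finite,linorder} clif) l) \<le> Bm TYPE('n) ^ l * norm x ^ l"
proof (induction l)
  case 0 thus ?case by (simp add: norm_creal1)
next
  case (Suc l)
  have "norm (cpow x (Suc l)) \<le> Bm TYPE('n) * norm x * norm (cpow x l)"
    unfolding cpow.simps by (rule norm_cmul_le1)
  also have "\<dots> \<le> Bm TYPE('n) * norm x * (Bm TYPE('n) ^ l * norm x ^ l)"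
    using Suc.IH by (intro mult_left_mono) auto
  finally show ?case by (simp add: algebra_simps)
qed

lemma term_bound:
  "norm (cmul (cpow (x :: 'n::{finite,linorder} clif) l) b) \<le> Bm TYPE('n) ^ Suc l * norm x ^ l * norm b"
proof -
  have "norm (cmul (cpow x l) b) \<le> Bm TYPE('n) * norm (cpow x l) * norm b" by (rule norm_cmul_le1)
  also have "\<dots> \<le> Bm TYPE('n) * (Bm TYPE('n) ^ l * norm x ^ l) * norm b"
    by (intro mult_right_mono mult_left_mono norm_cpow_le) auto
  finally show ?thesis by (simp add: algebra_simps)
qed

lemma coeff_bounded:
  fixes a :: "nat \<Rightarrow> 'n::{finite,linorder} clif"
  assumes sums: "\<forall>x. paravec x \<longrightarrow> (\<lambda>l. cmul (cpow x l) (a l)) sums f x" and R: "0 \<le> R"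
  shows "\<exists>D. \<forall>l. norm (a l) * R ^ l \<le> D"
proof -
  have "(\<lambda>l. cmul (cpow (creal R) l) (a l)) sums f (creal R)" using sums paravec_creal by blast
  hence "summable (\<lambda>l. R ^ l *\<^sub>R a l)" by (simp add: cpow_creal cmul_creal_left sums_iff)
  hence "(\<lambda>l. R ^ l *\<^sub>R a l) \<longlonglongrightarrow> 0" by (rule summable_LIMSEQ_zero)
  hence "Bseq (\<lambda>l. R ^ l *\<^sub>R a l)" by (rule convergent_imp_Bseq[OF convergentI])
  then obtain D where "\<And>l. norm (R ^ l *\<^sub>R a l) \<le> D" by (auto simp: Bseq_def)
  thus ?thesis using R by (intro exI[of _ D]) (simp add: mult.commute)
qed

lemma local_bound:
  fixes a :: "nat \<Rightarrow> 'n::{finite,linorder} clif"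
  assumes sums: "\<forall>x. paravec x \<longrightarrow> (\<lambda>l. cmul (cpow x l) (a l)) sums f x" and r: "0 \<le> r"
  shows "\<exists>M. \<forall>x. paravec x \<and> norm x \<le> r \<longrightarrow> norm (f x) \<le> M"
proof -
  let ?B = "Bm TYPE('n)"
  have B1: "1 \<le> ?B" by simp
  obtain D where D: "\<And>l. norm (a l) * (2 * ?B * r) ^ l \<le> D"
    using coeff_bounded[OF sums, of "2 * ?B * r"] r B1 by auto
  show ?thesis
  proof (intro exI[of _ "?B * D * 2"] allI impI)
    fix x :: "'n clif" assume x: "paravec x \<and> norm x \<le> r"
    have s1: "(\<lambda>l. cmul (cpow x l) (a l)) sums f x" using sums x by blast
    have s2: "(\<lambda>l. ?B * D * (1/2) ^ l) sums (?B * D * 2)"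
      using sums_mult[OF geometric_sums[of "1/2::real"], of "?B * D"] by simp
    have "norm (f x) \<le> ?B * D * 2"
    proof (rule norm_sums_le[OF s1 s2])
      fix l
      have "norm (cmul (cpow x l) (a l)) \<le> ?B ^ Suc l * norm x ^ l * norm (a l)" by (rule term_bound)
      also have "\<dots> \<le> ?B ^ Suc l * r ^ l * norm (a l)"
        using x by (intro mult_right_mono mult_left_mono power_mono) auto
      also have "\<dots> = ?B * (1/2) ^ l * (norm (a l) * (2 * ?B * r) ^ l)"
        by (simp add: power_mult_distrib field_simps)
      also have "\<dots> \<le> ?B * (1/2) ^ l * D"
        using D[of l] B1 by (intro mult_left_mono) auto
      finally show "norm (cmul (cpow x l) (a l)) \<le> ?B * D * (1/2) ^ l" by (simp add: algebra_simps)
    qed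
    thus "norm (f x) \<le> ?B * D * 2" .
  qed
qed


lemma slice_sums:
  fixes a :: "nat \<Rightarrow> 'n::{finite,linorder} clif"
  assumes sums: "\<forall>x. paravec x \<longrightarrow> (\<lambda>l. cmul (cpow x l) (a l)) sums f x"
  shows "(\<lambda>l. cc D k (a l) * w ^ l) sums cc D k (f (slice k w))"
proof -
  have "(\<lambda>l. cmul (cpow (slice k w) l) (a l)) sums f (slice k w)" using sums paravec_slice by blast
  from bounded_linear.sums[OF bounded_linear_cc this, of D k]
  show ?thesis by (simp add: cpow_slice cc_slice_mul mult.commute)
qed

lemma coeff_limsup:
  fixes a :: "nat \<Rightarrow> 'n::{finite,linorder} clif" and f :: "'n clif \<Rightarrow> 'n clif"
  assumes po: "proximate_order \<rho>r \<rho>" and np: "normalized_po \<rho>r"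
    and sums: "\<forall>x. paravec x \<longrightarrow> (\<lambda>l. cmul (cpow x l) (a l)) sums f x"
    and C: "\<forall>x. paravec x \<longrightarrow> norm (f x) \<le> C * exp (\<sigma> * norm x powr \<rho>r (norm x))"
  shows "limsup (\<lambda>l. ereal (norm (a l) powr (1 / real l) * po_inv \<rho>r (real l))) < \<infinity>"
proof -
  define k where "k = (undefined :: 'n)"
  define N where "N = real (CARD('n set))"
  define Cc where "Cc = 1 + N^3"
  define Dc where "Dc = max 1 (N * (Cc * C))"
  have Dc1: "1 \<le> Dc" unfolding Dc_def by simp
  have main: "norm (a l) powr (1 / real l) * po_inv \<rho>r (real l) \<le> Dc * exp \<sigma>" if l: "1 \<le> l" for l
  proof -
    define r where "r = po_inv \<rho>r (real l)"
    have rp: "0 < r \<and> r powr \<rho>r r = real l" unfolding r_def by (rule po_inv_prop[OF po np]) (use l in simp)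
    hence rpos: "0 < r" by simp
    have ccb: "cmod (cc D k (a l)) \<le> Cc * C * exp (\<sigma> * real l) / r ^ l" for D
    proof (rule cauchy_coeff[OF _ rpos])
      fix w :: complex
      show "summable (\<lambda>n. cc D k (a n) * w ^ n)" using slice_sums[OF sums] sums_summable by blast
      assume w: "cmod w = r"
      have "(\<Sum>n. cc D k (a n) * w ^ n) = cc D k (f (slice k w))" using slice_sums[OF sums] sums_unique by metis
      hence h1: "cmod (\<Sum>n. cc D k (a n) * w ^ n) \<le> Cc * norm (f (slice k w))"
        using norm_cc_le[of D k "f (slice k w)"] unfolding Cc_def N_def by simp
      have h2: "norm (f (slice k w)) \<le> C * exp (\<sigma> * real l)"
        using C paravec_slice[of k w] norm_slice[of k w] w rp by auto
      have "Cc * norm (f (slice k w)) \<le> Cc * (C * exp (\<sigma> * real l))"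
        by (rule mult_left_mono[OF h2]) (simp add: Cc_def N_def)
      with h1 show "cmod (\<Sum>n. cc D k (a n) * w ^ n) \<le> Cc * C * exp (\<sigma> * real l)"
        by (simp add: mult.assoc)
    qed
    have "norm (a l) \<le> (\<Sum>D\<in>UNIV. cmod (cc D k (a l)))" by (rule norm_le_sum_cc)
    also have "\<dots> \<le> (\<Sum>D\<in>(UNIV::'n set set). Cc * C * exp (\<sigma> * real l) / r ^ l)"
      by (intro sum_mono ccb)
    also have "\<dots> = N * (Cc * C) * (exp (\<sigma> * real l) / r ^ l)" unfolding N_def by simp
    also have "\<dots> \<le> Dc * (exp (\<sigma> * real l) / r ^ l)"
      unfolding Dc_def using rpos by (intro mult_right_mono) auto
    finally have al: "norm (a l) \<le> Dc * (exp (\<sigma> * real l) / r ^ l)" .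
    show ?thesis
    proof (cases "a l = 0")
      case True
      thus ?thesis using Dc1 by simp
    next
      case False
      have lpos: "0 < real l" using l by simp
      have "norm (a l) powr (1 / real l) \<le> (Dc * (exp (\<sigma> * real l) / r ^ l)) powr (1 / real l)"
        by (rule powr_mono2) (use al in auto)
      also have "\<dots> = Dc powr (1 / real l) * (exp (\<sigma> * real l) powr (1 / real l) / (r ^ l) powr (1 / real l))"
        by (simp add: powr_mult powr_divide)
      also have "exp (\<sigma> * real l) powr (1 / real l) = exp \<sigma>" using lpos by (simp add: exp_powr_real)
      also have "(r ^ l) powr (1 / real l) = r"
        using rpos lpos by (simp add: powr_realpow[symmetric] powr_powr)
      also have "Dc powr (1 / real l) \<le> Dc powr 1" by (rule powr_mono) (use l Dc1 in auto)
      also have "Dc powr 1 = Dc" using Dc1 by simp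
      finally have "norm (a l) powr (1 / real l) \<le> Dc * (exp \<sigma> / r)" using rpos by (simp add: divide_right_mono)
      hence "norm (a l) powr (1 / real l) * r \<le> Dc * (exp \<sigma> / r) * r"
        using rpos by (intro mult_right_mono) auto
      thus ?thesis using rpos unfolding r_def[symmetric] by simp
    qed
  qed
  have "limsup (\<lambda>l. ereal (norm (a l) powr (1 / real l) * po_inv \<rho>r (real l))) \<le> ereal (Dc * exp \<sigma>)"
    by (rule Limsup_bounded, rule eventually_sequentiallyI[of 1]) (use main in simp)
  thus ?thesis using le_less_trans[of _ "ereal (Dc * exp \<sigma>)" \<infinity>] by simp
qed


lemma growth_from_coeff:
  fixes a :: "nat \<Rightarrow> 'n::{finite,linorder} clif" and f :: "'n clif \<Rightarrow> 'n clif"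
  assumes po: "proximate_order \<rho>r \<rho>" and np: "normalized_po \<rho>r"
    and sums: "\<forall>x. paravec x \<longrightarrow> (\<lambda>l. cmul (cpow x l) (a l)) sums f x"
    and L: "limsup (\<lambda>l. ereal (norm (a l) powr (1 / real l) * po_inv \<rho>r (real l))) < \<infinity>"
  shows "\<exists>\<sigma>>0. \<exists>C. \<forall>x. paravec x \<longrightarrow> norm (f x) * exp (- \<sigma> * norm x powr \<rho>r (norm x)) \<le> C"
proof -
  define e where "e l = norm (a l) powr (1 / real l) * po_inv \<rho>r (real l)" for l
  obtain n0 :: nat where "limsup (\<lambda>l. ereal (e l)) < ereal (real n0)"
    using L less_PInf_Ex_of_nat unfolding e_def by auto
  hence "eventually (\<lambda>l. ereal (e l) < ereal (real n0)) sequentially" by (rule Limsup_lessD)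
  then obtain L0 where L0: "\<And>l. L0 \<le> l \<Longrightarrow> e l < real n0"
    unfolding eventually_sequentially by auto
  define K where "K = 1 + real n0 + (\<Sum>l\<le>L0. \<bar>e l\<bar>)"
  have Kpos: "0 < K" unfolding K_def by (simp add: add_pos_nonneg sum_nonneg)
  have eK: "e l \<le> K" for l
  proof (cases "L0 \<le> l")
    case True thus ?thesis using L0[OF True] unfolding K_def by (simp add: add_increasing2 sum_nonneg)
  next
    case False
    hence "\<bar>e l\<bar> \<le> (\<Sum>l\<le>L0. \<bar>e l\<bar>)" by (intro member_le_sum) auto
    thus ?thesis unfolding K_def by simp
  qed
  have aK: "norm (a l) \<le> (K / po_inv \<rho>r (real l)) ^ l" if l: "1 \<le> l" for l
  proof -
    define t where "t = po_inv \<rho>r (real l)"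
    have tpos: "0 < t" unfolding t_def using po_inv_prop[OF po np, of "real l"] l by simp
    have lpos: "0 < real l" using l by simp
    show ?thesis
    proof (cases "a l = 0")
      case True thus ?thesis using tpos Kpos unfolding t_def[symmetric] by simp
    next
      case False
      define y where "y = norm (a l) powr (1 / real l)"
      have ypos: "0 < y" unfolding y_def using False by simp
      have "y * t \<le> K" using eK[of l] unfolding e_def y_def t_def by simp
      hence yK: "y \<le> K / t" using tpos by (simp add: field_simps)
      have "norm (a l) = y ^ l"
        using ypos lpos False unfolding y_def by (simp add: powr_realpow[symmetric] powr_powr)
      also have "\<dots> \<le> (K / t) ^ l" using yK ypos by (intro power_mono) auto
      finally show ?thesis unfolding t_def .
    qed
  qed
  let ?B = "Bm TYPE('n)"
  have B1: "1 \<le> ?B" by simp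
  obtain \<sigma> c where \<sigma>: "0 < \<sigma>" and G: "\<And>r l. 0 \<le> r \<Longrightarrow> 1 \<le> l \<Longrightarrow>
       (?B * K * r / po_inv \<rho>r (real l)) ^ l \<le> (1/2) ^ l * exp (c + \<sigma> * r powr \<rho>r r)"
    using growth[OF po np, of "?B * K"] Kpos B1 by auto
  define A0 where "A0 = ?B * (norm (a 0) + exp c)"
  show ?thesis
  proof (rule exI[of _ \<sigma>], intro conjI \<sigma> exI[of _ "2 * A0"] allI impI)
    fix x :: "'n clif" assume x: "paravec x"
    define r where "r = norm x"
    define V where "V = r powr \<rho>r r"
    have V0: "0 \<le> V" unfolding V_def by simp
    have eV1: "1 \<le> exp (\<sigma> * V)" using \<sigma> V0 by simp
    have s1: "(\<lambda>l. cmul (cpow x l) (a l)) sums f x" using sums x by blast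
    have s2: "(\<lambda>l. A0 * exp (\<sigma> * V) * (1/2) ^ l) sums (A0 * exp (\<sigma> * V) * 2)"
      using sums_mult[OF geometric_sums[of "1/2::real"], of "A0 * exp (\<sigma> * V)"] by simp
    have "norm (f x) \<le> A0 * exp (\<sigma> * V) * 2"
    proof (rule norm_sums_le[OF s1 s2])
      fix l
      show "norm (cmul (cpow x l) (a l)) \<le> A0 * exp (\<sigma> * V) * (1/2) ^ l"
      proof (cases "l = 0")
        case True
        have p: "0 \<le> norm (a 0) + exp c" by (simp add: add_nonneg_pos)
        have "norm (a 0) \<le> 1 * (norm (a 0) + exp c)" by simp
        also have "\<dots> \<le> ?B * (norm (a 0) + exp c)" by (rule mult_right_mono[OF B1 p])
        also have "\<dots> = ?B * (norm (a 0) + exp c) * 1" by simp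
        also have "\<dots> \<le> ?B * (norm (a 0) + exp c) * exp (\<sigma> * V)"
          by (rule mult_left_mono[OF eV1]) (use B1 p in simp)
        finally show ?thesis using True unfolding A0_def by (simp add: cmul_creal_left)
      next
        case False
        hence l: "1 \<le> l" by simp
        define t where "t = po_inv \<rho>r (real l)"
        have tpos: "0 < t" unfolding t_def using po_inv_prop[OF po np, of "real l"] l by simp
        have "norm (cmul (cpow x l) (a l)) \<le> ?B ^ Suc l * norm x ^ l * norm (a l)" by (rule term_bound)
        also have "\<dots> \<le> ?B ^ Suc l * r ^ l * (K / t) ^ l"
          unfolding r_def t_def using aK[OF l] B1 by (intro mult_left_mono) auto
        also have "\<dots> = ?B * (?B * K * r / t) ^ l" by (simp add: power_mult_distrib field_simps)
        also have "\<dots> \<le> ?B * ((1/2) ^ l * exp (c + \<sigma> * V))"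
          using G[of r l] l B1 unfolding r_def V_def t_def by (intro mult_left_mono) auto
        also have "\<dots> = ?B * exp c * exp (\<sigma> * V) * (1/2) ^ l" by (simp add: exp_add)
        also have "\<dots> \<le> A0 * exp (\<sigma> * V) * (1/2) ^ l"
          unfolding A0_def using B1 by (intro mult_right_mono mult_left_mono) auto
        finally show ?thesis .
      qed
    qed
    hence "norm (f x) * exp (- \<sigma> * V) \<le> A0 * exp (\<sigma> * V) * 2 * exp (- \<sigma> * V)"
      by (intro mult_right_mono) auto
    also have "\<dots> = 2 * A0" by (simp add: exp_minus field_simps)
    finally show "norm (f x) * exp (- \<sigma> * norm x powr \<rho>r (norm x)) \<le> 2 * A0"
      unfolding V_def r_def .
  qed
qed


lemma paravec_zero: "paravec 0"
  by (simp add: paravec_def)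

lemma maxmod_upper:
  assumes M: "\<forall>x. paravec x \<and> norm x \<le> r \<longrightarrow> norm (f x) \<le> M" and x: "paravec x" "norm x \<le> r"
  shows "norm (f x) \<le> maxmod f r"
  unfolding maxmod_def
  by (rule cSup_upper) (use M x in \<open>auto simp: bdd_above_def\<close>)

lemma maxmod_least:
  assumes r: "0 \<le> r" and M: "\<forall>x. paravec x \<and> norm x \<le> r \<longrightarrow> norm (f x) \<le> M"
  shows "maxmod f r \<le> M"
  unfolding maxmod_def
  by (rule cSup_least) (use M r paravec_zero in auto)

lemma maxmod_nonneg:
  assumes r: "0 \<le> r" and M: "\<forall>x. paravec x \<and> norm x \<le> r \<longrightarrow> norm (f x) \<le> M"
  shows "0 \<le> maxmod f r"
  using maxmod_upper[OF M paravec_zero] r by (metis norm_ge_zero norm_zero order_trans)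

lemma exp_form:
  assumes "norm (y::'a::real_normed_vector) * exp (- \<sigma> * v) \<le> C"
  shows "norm y \<le> C * exp (\<sigma> * v)"
proof -
  have "norm y = norm y * exp (- \<sigma> * v) * exp (\<sigma> * v)" by (simp add: exp_minus)
  also have "\<dots> \<le> C * exp (\<sigma> * v)" using assms by (intro mult_right_mono) auto
  finally show ?thesis .
qed

lemma limsup_from_growth:
  fixes f :: "'n::{finite,linorder} clif \<Rightarrow> 'n clif"
  assumes po: "proximate_order \<rho>r \<rho>" and np: "normalized_po \<rho>r" and \<sigma>: "0 < \<sigma>"
    and G: "\<forall>x. paravec x \<longrightarrow> norm (f x) * exp (- \<sigma> * norm x powr \<rho>r (norm x)) \<le> C"
  shows "Limsup at_top (\<lambda>r. ereal (ln (maxmod f r) / r powr \<rho>r r)) < \<infinity>"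
proof -
  have G': "norm (f x) \<le> C * exp (\<sigma> * norm x powr \<rho>r (norm x))" if "paravec x" for x
    using G that exp_form by blast
  have "0 \<le> norm (f 0) * exp (- \<sigma> * norm (0::'n clif) powr \<rho>r (norm (0::'n clif)))" by simp
  hence C0: "0 \<le> C" using G[rule_format, OF paravec_zero] by linarith
  obtain R where R: "R > 0" "\<And>r. r \<ge> R \<Longrightarrow> 1 \<le> r powr \<rho>r r" using V_large[OF po np] by blast
  have "eventually (\<lambda>r. ereal (ln (maxmod f r) / r powr \<rho>r r) \<le> ereal (\<bar>ln C\<bar> + \<sigma>)) at_top"
    unfolding eventually_at_top_linorder
  proof (intro exI[of _ R] allI impI)
    fix r assume rR: "R \<le> r"
    have r0: "0 \<le> r" using rR R by simp
    define V where "V = r powr \<rho>r r"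
    have V1: "1 \<le> V" unfolding V_def using R(2)[OF rR] .
    have Mb: "\<forall>x. paravec x \<and> norm x \<le> r \<longrightarrow> norm (f x) \<le> C * exp (\<sigma> * V)"
    proof (intro allI impI)
      fix x :: "'n clif" assume x: "paravec x \<and> norm x \<le> r"
      have "norm x powr \<rho>r (norm x) \<le> V" unfolding V_def by (rule V_mono[OF np]) (use x in auto)
      hence "exp (\<sigma> * norm x powr \<rho>r (norm x)) \<le> exp (\<sigma> * V)" using \<sigma> by simp
      hence "C * exp (\<sigma> * norm x powr \<rho>r (norm x)) \<le> C * exp (\<sigma> * V)" by (rule mult_left_mono) (rule C0)
      thus "norm (f x) \<le> C * exp (\<sigma> * V)" using G'[of x] x by linarith
    qed
    have mm: "maxmod f r \<le> C * exp (\<sigma> * V)" by (rule maxmod_least[OF r0 Mb])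
    have m0: "0 \<le> maxmod f r" by (rule maxmod_nonneg[OF r0 Mb])
    have "ln (maxmod f r) / V \<le> \<bar>ln C\<bar> + \<sigma>"
    proof (cases "maxmod f r = 0")
      case True thus ?thesis using \<sigma> by simp
    next
      case False
      hence mp: "0 < maxmod f r" using m0 by simp
      hence "0 < C * exp (\<sigma> * V)" using mm by linarith
      hence Cp: "0 < C" by (simp add: zero_less_mult_iff)
      have "ln (maxmod f r) \<le> ln (C * exp (\<sigma> * V))" using mm mp by simp
      also have "\<dots> = ln C + \<sigma> * V" using Cp by (simp add: ln_mult)
      finally have "ln (maxmod f r) / V \<le> (ln C + \<sigma> * V) / V" using V1 by (simp add: divide_right_mono)
      also have "\<dots> = ln C / V + \<sigma>" using V1 by (simp add: field_simps)
      also have "ln C / V \<le> \<bar>ln C\<bar>"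
      proof -
        have "ln C / V \<le> \<bar>ln C\<bar> / V" using V1 by (simp add: divide_right_mono)
        also have "\<dots> \<le> \<bar>ln C\<bar> / 1" using V1 by (intro divide_left_mono) auto
        finally show ?thesis by simp
      qed
      finally show ?thesis by simp
    qed
    thus "ereal (ln (maxmod f r) / r powr \<rho>r r) \<le> ereal (\<bar>ln C\<bar> + \<sigma>)" unfolding V_def by simp
  qed
  hence "Limsup at_top (\<lambda>r. ereal (ln (maxmod f r) / r powr \<rho>r r)) \<le> ereal (\<bar>ln C\<bar> + \<sigma>)"
    by (rule Limsup_bounded)
  thus ?thesis using le_less_trans[of _ "ereal (\<bar>ln C\<bar> + \<sigma>)" \<infinity>] by simp
qed

lemma growth_from_limsup:
  fixes a :: "nat \<Rightarrow> 'n::{finite,linorder} clif" and f :: "'n clif \<Rightarrow> 'n clif"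
  assumes po: "proximate_order \<rho>r \<rho>" and np: "normalized_po \<rho>r"
    and sums: "\<forall>x. paravec x \<longrightarrow> (\<lambda>l. cmul (cpow x l) (a l)) sums f x"
    and L: "Limsup at_top (\<lambda>r. ereal (ln (maxmod f r) / r powr \<rho>r r)) < \<infinity>"
  shows "\<exists>\<sigma>>0. \<exists>C. \<forall>x. paravec x \<longrightarrow> norm (f x) * exp (- \<sigma> * norm x powr \<rho>r (norm x)) \<le> C"
proof -
  obtain n0 :: nat where "Limsup at_top (\<lambda>r. ereal (ln (maxmod f r) / r powr \<rho>r r)) < ereal (real n0)"
    using L less_PInf_Ex_of_nat by auto
  hence "eventually (\<lambda>r. ereal (ln (maxmod f r) / r powr \<rho>r r) < ereal (real n0)) at_top"
    by (rule Limsup_lessD)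
  then obtain R0 where R0: "\<And>r. R0 \<le> r \<Longrightarrow> ln (maxmod f r) / r powr \<rho>r r < real n0"
    unfolding eventually_at_top_linorder by auto
  define R where "R = max R0 1"
  have R0': "0 \<le> R" unfolding R_def by simp
  obtain M0 where M0: "\<forall>x. paravec x \<and> norm x \<le> R \<longrightarrow> norm (f x) \<le> M0"
    using local_bound[OF sums R0'] by blast
  define \<sigma> where "\<sigma> = max 1 (real n0)"
  have \<sigma>: "0 < \<sigma>" unfolding \<sigma>_def by simp
  show ?thesis
  proof (rule exI[of _ \<sigma>], intro conjI \<sigma> exI[of _ "max 1 M0"] allI impI)
    fix x :: "'n clif" assume x: "paravec x"
    define V where "V = norm x powr \<rho>r (norm x)"
    have V0: "0 \<le> V" unfolding V_def by simp
    have e1: "exp (- \<sigma> * V) \<le> 1" using \<sigma> V0 by simp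
    have "norm (f x) * exp (- \<sigma> * V) \<le> max 1 M0"
    proof (cases "norm x \<le> R")
      case True
      hence "norm (f x) \<le> M0" using M0 x by blast
      moreover have "norm (f x) * exp (- \<sigma> * V) \<le> norm (f x)"
        using e1 by (simp add: mult_left_le)
      ultimately show ?thesis by linarith
    next
      case False
      hence xR: "R < norm x" by simp
      have xpos: "0 < norm x" using xR unfolding R_def by linarith
      have Vpos: "0 < V" unfolding V_def using xpos by simp
      obtain M1 where M1: "\<forall>y. paravec y \<and> norm y \<le> norm x \<longrightarrow> norm (f y) \<le> M1"
        using local_bound[OF sums norm_ge_zero[of x]] by blast
      have fm: "norm (f x) \<le> maxmod f (norm x)" by (rule maxmod_upper[OF M1 x]) simp
      show ?thesis
      proof (cases "f x = 0")
        case True thus ?thesis by simp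
      next
        case False
        hence "0 < norm (f x)" by simp
        hence mp: "0 < maxmod f (norm x)" using fm by linarith
        have "ln (maxmod f (norm x)) / V < real n0" unfolding V_def by (rule R0) (use xR in \<open>simp add: R_def\<close>)
        hence "ln (maxmod f (norm x)) < real n0 * V" using Vpos by (simp add: field_simps)
        also have "\<dots> \<le> \<sigma> * V" unfolding \<sigma>_def using V0 by (intro mult_right_mono) auto
        finally have "ln (maxmod f (norm x)) < \<sigma> * V" .
        hence "exp (ln (maxmod f (norm x))) < exp (\<sigma> * V)" by (simp only: exp_less_cancel_iff)
        hence "maxmod f (norm x) < exp (\<sigma> * V)" using exp_ln[OF mp] by simp
        hence "norm (f x) < exp (\<sigma> * V)" using fm by linarith
        hence "norm (f x) * exp (- \<sigma> * V) < exp (\<sigma> * V) * exp (- \<sigma> * V)"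
          by (intro mult_strict_right_mono) auto
        also have "\<dots> = 1" by (simp add: exp_minus)
        finally show ?thesis by linarith
      qed
    qed
    thus "norm (f x) * exp (- \<sigma> * norm x powr \<rho>r (norm x)) \<le> max 1 M0" unfolding V_def .
  qed
qed


lemma A_r_iff:
  assumes "f \<in> SM_L"
  shows "f \<in> A_r \<rho>r \<longleftrightarrow> (\<exists>\<sigma>>0. \<exists>C. \<forall>x. paravec x \<longrightarrow> norm (f x) * exp (- \<sigma> * norm x powr \<rho>r (norm x)) \<le> C)"
  using assms unfolding A_r_def A_rs_def by auto

theorem proposition3p9:
  fixes \<rho>r :: "real \<Rightarrow> real" and \<rho> :: real
    and f :: "'n::{finite,linorder} clif \<Rightarrow> 'n clif" and a :: "nat \<Rightarrow> 'n clif"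
  assumes "proximate_order \<rho>r \<rho>" and "normalized_po \<rho>r"
    and "f \<in> SM_L"
    and "\<forall>x. paravec x \<longrightarrow> (\<lambda>l. cmul (cpow x l) (a l)) sums f x"
  shows "(f \<in> A_r \<rho>r \<longleftrightarrow>
            Limsup at_top (\<lambda>r. ereal (ln (maxmod f r) / r powr \<rho>r r)) < \<infinity>) \<and>
         (f \<in> A_r \<rho>r \<longleftrightarrow>
            limsup (\<lambda>l. ereal (norm (a l) powr (1 / real l) * po_inv \<rho>r (real l))) < \<infinity>) \<and>
         (f \<in> A_r \<rho>r \<longleftrightarrow>
            Inf (ereal ` {\<beta>. 0 < \<beta> \<and> f \<in> A_rs \<rho>r \<beta>}) < \<infinity>)"
proof (intro conjI)
  note po = assms(1) and np = assms(2) and sm = assms(3) and sums = assms(4)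
  show "f \<in> A_r \<rho>r \<longleftrightarrow> Limsup at_top (\<lambda>r. ereal (ln (maxmod f r) / r powr \<rho>r r)) < \<infinity>"
  proof
    assume "f \<in> A_r \<rho>r"
    then obtain \<sigma> C where "0 < \<sigma>" "\<forall>x. paravec x \<longrightarrow> norm (f x) * exp (- \<sigma> * norm x powr \<rho>r (norm x)) \<le> C"
      using A_r_iff[OF sm] by blast
    thus "Limsup at_top (\<lambda>r. ereal (ln (maxmod f r) / r powr \<rho>r r)) < \<infinity>"
      by (intro limsup_from_growth[OF po np])
  next
    assume "Limsup at_top (\<lambda>r. ereal (ln (maxmod f r) / r powr \<rho>r r)) < \<infinity>"
    from growth_from_limsup[OF po np sums this] show "f \<in> A_r \<rho>r" using A_r_iff[OF sm] by blast
  qed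
  show "f \<in> A_r \<rho>r \<longleftrightarrow> limsup (\<lambda>l. ereal (norm (a l) powr (1 / real l) * po_inv \<rho>r (real l))) < \<infinity>"
  proof
    assume "f \<in> A_r \<rho>r"
    then obtain \<sigma> C where G: "\<forall>x. paravec x \<longrightarrow> norm (f x) * exp (- \<sigma> * norm x powr \<rho>r (norm x)) \<le> C"
      using A_r_iff[OF sm] by blast
    have "\<forall>x. paravec x \<longrightarrow> norm (f x) \<le> C * exp (\<sigma> * norm x powr \<rho>r (norm x))"
      using G exp_form by blast
    thus "limsup (\<lambda>l. ereal (norm (a l) powr (1 / real l) * po_inv \<rho>r (real l))) < \<infinity>"
      by (rule coeff_limsup[OF po np sums])
  next
    assume "limsup (\<lambda>l. ereal (norm (a l) powr (1 / real l) * po_inv \<rho>r (real l))) < \<infinity>"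
    from growth_from_coeff[OF po np sums this] show "f \<in> A_r \<rho>r" using A_r_iff[OF sm] by blast
  qed
  show "f \<in> A_r \<rho>r \<longleftrightarrow> Inf (ereal ` {\<beta>. 0 < \<beta> \<and> f \<in> A_rs \<rho>r \<beta>}) < \<infinity>"
  proof
    assume "f \<in> A_r \<rho>r"
    then obtain \<beta> where b: "0 < \<beta>" "f \<in> A_rs \<rho>r \<beta>" unfolding A_r_def by auto
    have "Inf (ereal ` {\<beta>. 0 < \<beta> \<and> f \<in> A_rs \<rho>r \<beta>}) \<le> ereal \<beta>"
      by (rule Inf_lower) (use b in auto)
    thus "Inf (ereal ` {\<beta>. 0 < \<beta> \<and> f \<in> A_rs \<rho>r \<beta>}) < \<infinity>"
      using le_less_trans[of _ "ereal \<beta>" \<infinity>] by simp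
  next
    assume h: "Inf (ereal ` {\<beta>. 0 < \<beta> \<and> f \<in> A_rs \<rho>r \<beta>}) < \<infinity>"
    have "{\<beta>. 0 < \<beta> \<and> f \<in> A_rs \<rho>r \<beta>} \<noteq> {}"
    proof
      assume "{\<beta>. 0 < \<beta> \<and> f \<in> A_rs \<rho>r \<beta>} = {}"
      with h show False by (simp add: top_ereal_def)
    qed
    thus "f \<in> A_r \<rho>r" unfolding A_r_def by auto
  qed
qed


end
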